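(* Let $\Gamma=(V,E,m)$ be a connected even-labeled graph, $u\in V$ and $k\ge 2$. Let $M_{\Gamma,u,k}$ be the Alexander matrix of the standard presentation of $\mathbb{A}_{\Gamma,u,k}$. Then $\operatorname{corank}(M_{\Gamma,u,k})\le 1$, where the corank is the number of columns (generators) minus the rank over the field of fractions of $\Lambda=\mathbb{C}[H_1(\mathbb{A}_{\Gamma,u,k})]$.
   Context: Setting: $\Gamma=(V,E,m)$ finite simple graph with even labels $m_e=2\ell_e$; $\mathbb{A}_\Gamma=\langle V\mid (xy)^{\ell_e}=(yx)^{\ell_e},\ \{x,y\}\in E\rangle$. For $u\in V$, $k\ge2$, $\mathbb{A}_{\Gamma,u,k}=\ker(\mathbb{A}_\Gamma\to\mathbb{Z}_k,\ u\mapsto1,\ v\mapsto0\ (v\ne u))$. $V_{2,u}$ = vertices joined to $u$ by an edge of label 2, $W=V\setminus(\{u\}\cup V_{2,u})$. Standard presentation of $\mathbb{A}_{\Gamma,u,k}$: generators $\bar u=u^k$, $v\in V_{2,u}$, $w_i=u^iwu^{-i}$ ($w\in W$, $0\le i<k$); relations $v\bar u=\bar uv$ ($v\in V_{2,u}$); $(xy)^{\ell_e}=(yx)^{\ell_e}$ for $x,y\in V_{2,u}$ adjacent; $(vw_i)^{\ell_e}=(w_iv)^{\ell_e}$ for $v\in V_{2,u},w\in W$ adjacent; $(w_iw'_i)^{\ell_e}=(w'_iw_i)^{\ell_e}$ for $w,w'\in W$ adjacent; and for each $w\in W$ adjacent to $u$ and each $0\le i<k$: $W_i\cdots W_{i+\ell_e-1}=W_{i+1}\cdots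 W_{i+\ell_e}$ with $W_j=\bar u^qw_s\bar u^{-q}$ for $j=qk+s$, $0\le s<k$. $H_1(\mathbb{A}_{\Gamma,u,k})$ is free abelian. The Alexander matrix of a finite presentation has entries the Fox derivatives $\partial R_i/\partial x_j$ of the relators (a relation $A=B$ giving relator $AB^{-1}$) mapped to $\mathbb{C}[H_1]$ via abelianization; rows = relations, columns = generators. *)

theory Defs
  imports Complex_Main "HOL-Library.Poly_Mapping"
begin

definition even_labeled_graph :: "'v set \<Rightarrow> 'v set set \<Rightarrow> ('v set \<Rightarrow> nat) \<Rightarrow> bool" where
  "even_labeled_graph V E m \<longleftrightarrow> finite V \<and>
     (\<forall>e\<in>E. \<exists>x y. e = {x, y} \<and> x \<noteq> y \<and> x \<in> V \<and> y \<in> V) \<and>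
     (\<forall>e\<in>E. even (m e) \<and> 2 \<le> m e)"

definition graph_connected :: "'v set \<Rightarrow> 'v set set \<Rightarrow> bool" where
  "graph_connected V E \<longleftrightarrow>
     (\<forall>x\<in>V. \<forall>y\<in>V. (x, y) \<in> {(a, b). {a, b} \<in> E}\<^sup>*)"

definition half_label :: "('v set \<Rightarrow> nat) \<Rightarrow> 'v set \<Rightarrow> nat" where
  "half_label m e = m e div 2"

text \<open>Generators: Ubar = u^k, Vg v for v in V_{2,u}, Wg w i = u^i w u^{-i}.\<close>
datatype 'v gen = Ubar | Vg 'v | Wg 'v nat

text \<open>Words in the free group: letters (g, False) = g, (g, True) = g^{-1}.\<close>
type_synonym 'g word = "('g \<times> bool) list"

definition inv_word :: "'g word \<Rightarrow> 'g word" where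
  "inv_word w = rev (map (\<lambda>(g, b). (g, \<not> b)) w)"

definition rel_word :: "'g word \<Rightarrow> 'g word \<Rightarrow> 'g word" where
  "rel_word A B = A @ inv_word B"

definition pos_pow :: "nat \<Rightarrow> 'g list \<Rightarrow> 'g word" where
  "pos_pow l gs = concat (replicate l (map (\<lambda>g. (g, False)) gs))"

definition V2u :: "'v set \<Rightarrow> 'v set set \<Rightarrow> ('v set \<Rightarrow> nat) \<Rightarrow> 'v \<Rightarrow> 'v set" where
  "V2u V E m u = {v \<in> V. {u, v} \<in> E \<and> m {u, v} = 2}"

definition Wu :: "'v set \<Rightarrow> 'v set set \<Rightarrow> ('v set \<Rightarrow> nat) \<Rightarrow> 'v \<Rightarrow> 'v set" where
  "Wu V E m u = V - ({u} \<union> V2u V E m u)"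

definition gens :: "'v set \<Rightarrow> 'v set set \<Rightarrow> ('v set \<Rightarrow> nat) \<Rightarrow> 'v \<Rightarrow> nat \<Rightarrow> 'v gen set" where
  "gens V E m u k = insert Ubar (Vg ` V2u V E m u \<union>
      {Wg w i | w i. w \<in> Wu V E m u \<and> i < k})"

definition Wj_word :: "nat \<Rightarrow> 'v \<Rightarrow> nat \<Rightarrow> 'v gen word" where
  "Wj_word k w j = replicate (j div k) (Ubar, False) @ [(Wg w (j mod k), False)]
       @ replicate (j div k) (Ubar, True)"

text \<open>The relators of the standard presentation. A linear order on vertices is
  used only to pick one orientation (x < y) of each symmetric relation on an edge.\<close>
definition relators :: "'v::linorder set \<Rightarrow> 'v set set \<Rightarrow> ('v set \<Rightarrow> nat) \<Rightarrow> 'v \<Rightarrow> nat \<Rightarrow> 'v gen word set" where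
  "relators V E m u k =
     (let V2 = V2u V E m u; W = Wu V E m u; l = half_label m in
       {rel_word [(Vg v, False), (Ubar, False)] [(Ubar, False), (Vg v, False)] | v. v \<in> V2}
     \<union> {rel_word (pos_pow (l {x, y}) [Vg x, Vg y]) (pos_pow (l {x, y}) [Vg y, Vg x])
          | x y. x \<in> V2 \<and> y \<in> V2 \<and> x < y \<and> {x, y} \<in> E}
     \<union> {rel_word (pos_pow (l {v, w}) [Vg v, Wg w i]) (pos_pow (l {v, w}) [Wg w i, Vg v])
          | v w i. v \<in> V2 \<and> w \<in> W \<and> {v, w} \<in> E \<and> i < k}
     \<union> {rel_word (pos_pow (l {w, w'}) [Wg w i, Wg w' i]) (pos_pow (l {w, w'}) [Wg w' i, Wg w i])
          | w w' i. w \<in> W \<and> w' \<in> W \<and> w < w' \<and> {w, w'} \<in> E \<and> i < k}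
     \<union> {rel_word (concat (map (Wj_word k w) [i..<i + l {u, w}]))
                 (concat (map (Wj_word k w) [i + 1..<i + l {u, w} + 1]))
          | w i. w \<in> W \<and> {u, w} \<in> E \<and> i < k})"

text \<open>Abelianization of the free group on 'g: exponent-sum vector in Z^('g).\<close>
definition ab_word :: "'g word \<Rightarrow> ('g \<Rightarrow>\<^sub>0 int)" where
  "ab_word w = sum_list (map (\<lambda>(g, b). Poly_Mapping.single g (if b then -1 else 1)) w)"

text \<open>C[Z^('g)]: the group ring of the abelianized free group.\<close>
type_synonym 'g gring = "('g \<Rightarrow>\<^sub>0 int) \<Rightarrow>\<^sub>0 complex"

definition grp_elt :: "('g \<Rightarrow>\<^sub>0 int) \<Rightarrow> 'g gring" where
  "grp_elt a = Poly_Mapping.single a 1"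

text \<open>Fox derivative d w / d x (in Z[F]) followed by abelianization F -> Z^('g):
  d(y_1^{e_1}...y_n^{e_n})/dx = sum over i with y_i = x of
  y_1^{e_1}...y_{i-1}^{e_{i-1}} if e_i = 1, and - y_1^{e_1}...y_i^{e_i} if e_i = -1.\<close>
definition fox_ab :: "'g word \<Rightarrow> 'g \<Rightarrow> 'g gring" where
  "fox_ab w x = (\<Sum>i<length w. (case w ! i of (g, b) \<Rightarrow>
      if g = x then (if b then - grp_elt (ab_word (take (Suc i) w))
                         else grp_elt (ab_word (take i w)))
      else 0))"

text \<open>The subgroup N of Z^('g) generated by the abelianized relators, so that
  H_1 = Z^('g) / N.\<close>
inductive_set rel_subgroup :: "'g word set \<Rightarrow> ('g \<Rightarrow>\<^sub>0 int) set" for Rs where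
  zero: "0 \<in> rel_subgroup Rs"
| plus: "a \<in> rel_subgroup Rs \<Longrightarrow> r \<in> Rs \<Longrightarrow> a + ab_word r \<in> rel_subgroup Rs"
| minus: "a \<in> rel_subgroup Rs \<Longrightarrow> r \<in> Rs \<Longrightarrow> a - ab_word r \<in> rel_subgroup Rs"

text \<open>An element p of C[Z^('g)] maps to zero in Lambda = C[H_1] = C[Z^('g)/N]
  iff for every coset h + N the sum of the coefficients of p over the coset vanishes.\<close>
definition zero_in_Lambda :: "('g \<Rightarrow>\<^sub>0 int) set \<Rightarrow> 'g gring \<Rightarrow> bool" where
  "zero_in_Lambda N p \<longleftrightarrow>
     (\<forall>h. (\<Sum>a\<in>{a \<in> Poly_Mapping.keys p. a - h \<in> N}. Poly_Mapping.lookup p a) = 0)"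

text \<open>A set S of columns of the matrix M (rows Rs, entries in C[Z^('g)], read in
  Lambda) is linearly independent over Frac(Lambda); since Lambda is a domain this
  means: independent over Lambda (denominators can be cleared).\<close>
definition cols_independent ::
  "('g \<Rightarrow>\<^sub>0 int) set \<Rightarrow> 'r set \<Rightarrow> ('r \<Rightarrow> 'g \<Rightarrow> 'g gring) \<Rightarrow> 'g set \<Rightarrow> bool" where
  "cols_independent N Rs M S \<longleftrightarrow>
     (\<forall>c :: 'g \<Rightarrow> 'g gring.
        (\<forall>r\<in>Rs. zero_in_Lambda N (\<Sum>g\<in>S. c g * M r g)) \<longrightarrow> (\<forall>g\<in>S. zero_in_Lambda N (c g)))"

definition frac_rank ::
  "('g \<Rightarrow>\<^sub>0 int) set \<Rightarrow> 'r set \<Rightarrow> 'g set \<Rightarrow> ('r \<Rightarrow> 'g \<Rightarrow> 'g gring) \<Rightarrow> nat" where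
  "frac_rank N Rs Cs M = Max {card S | S. S \<subseteq> Cs \<and> cols_independent N Rs M S}"

text \<open>Alexander matrix M_{Gamma,u,k}: rows = relators, columns = generators,
  entries = abelianized Fox derivatives, read in Lambda = C[H_1(A_{Gamma,u,k})].\<close>
definition alexander_corank :: "'v::linorder set \<Rightarrow> 'v set set \<Rightarrow> ('v set \<Rightarrow> nat) \<Rightarrow> 'v \<Rightarrow> nat \<Rightarrow> nat" where
  "alexander_corank V E m u k =
     (let Rs = relators V E m u k; Cs = gens V E m u k in
        card Cs - frac_rank (rel_subgroup Rs) Rs Cs (\<lambda>r g. fox_ab r g))"

end

theory Submission
  imports Defs
begin

definition sig :: "('g \<Rightarrow>\<^sub>0 int) set \<Rightarrow> 'g gring \<Rightarrow> ('g \<Rightarrow>\<^sub>0 int) \<Rightarrow> complex" where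
  "sig N p h = (\<Sum>a\<in>{a \<in> Poly_Mapping.keys p. a - h \<in> N}. Poly_Mapping.lookup p a)"

lemma Zl_sig: "zero_in_Lambda N p \<longleftrightarrow> (\<forall>h. sig N p h = 0)"
  by (simp add: zero_in_Lambda_def sig_def)

lemma sig_superset:
  assumes "finite K" "Poly_Mapping.keys p \<subseteq> K"
  shows "sig N p h = (\<Sum>a\<in>{a \<in> K. a - h \<in> N}. Poly_Mapping.lookup p a)"
  unfolding sig_def
  by (rule sum.mono_neutral_left) (use assms in \<open>auto simp: in_keys_iff\<close>)

lemma sig_add: "sig N (p + q) h = sig N p h + sig N q h"
proof -
  let ?K = "Poly_Mapping.keys p \<union> Poly_Mapping.keys q"
  have f: "finite ?K" by simp
  have "sig N (p + q) h = (\<Sum>a\<in>{a \<in> ?K. a - h \<in> N}. Poly_Mapping.lookup (p + q) a)"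
    by (rule sig_superset[OF f]) (simp add: keys_add)
  also have "\<dots> = (\<Sum>a\<in>{a \<in> ?K. a - h \<in> N}. Poly_Mapping.lookup p a)
      + (\<Sum>a\<in>{a \<in> ?K. a - h \<in> N}. Poly_Mapping.lookup q a)"
    by (simp add: lookup_add sum.distrib)
  also have "\<dots> = sig N p h + sig N q h"
    by (subst (1 2) sig_superset[OF f]) auto
  finally show ?thesis .
qed

lemma sig_uminus: "sig N (- p) h = - sig N p h"
  by (simp add: sig_def sum_negf)

lemma sig_diff: "sig N (p - q) h = sig N p h - sig N q h"
  using sig_add[of N p "- q" h] sig_uminus[of N q h] by simp

lemma sig_zero: "sig N 0 h = 0"
  by (simp add: sig_def)

lemma sig_single: "sig N (Poly_Mapping.single a c) h = (if a - h \<in> N then c else 0)"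
  by (subst sig_superset[of "{a}"]) (auto simp: Collect_conv_if)

lemma update_eq_add:
  assumes "a \<notin> Poly_Mapping.keys f"
  shows "Poly_Mapping.update a b f = f + Poly_Mapping.single a b"
  by (rule poly_mapping_eqI) (use assms in \<open>auto simp: lookup_update lookup_add lookup_single in_keys_iff when_def\<close>)

lemma lookup_mult_single:
  fixes p :: "('g::ab_group_add) \<Rightarrow>\<^sub>0 'b::comm_ring_1"
  shows "Poly_Mapping.lookup (p * Poly_Mapping.single a b) x = Poly_Mapping.lookup p (x - a) * b"
proof (induction p rule: update_induct)
  case const
  then show ?case by simp
next
  case (update f a' b')
  then show ?case
    by (auto simp: update_eq_add distrib_right mult_single lookup_add lookup_single when_def
        algebra_simps)
qed

lemma sig_mult_single:
  "sig N (p * Poly_Mapping.single a b) h = b * sig N p (h - a)"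
proof -
  let ?K = "(\<lambda>y. y + a) ` Poly_Mapping.keys p"
  have f: "finite ?K" by simp
  have sub: "Poly_Mapping.keys (p * Poly_Mapping.single a b) \<subseteq> ?K"
  proof
    fix x assume "x \<in> Poly_Mapping.keys (p * Poly_Mapping.single a b)"
    then have "x - a \<in> Poly_Mapping.keys p"
      by (auto simp: in_keys_iff lookup_mult_single)
    then show "x \<in> ?K" by (force intro: image_eqI[where x = "x - a"])
  qed
  have "sig N (p * Poly_Mapping.single a b) h
      = (\<Sum>x\<in>{x \<in> ?K. x - h \<in> N}. Poly_Mapping.lookup p (x - a) * b)"
    by (subst sig_superset[OF f sub]) (simp add: lookup_mult_single)
  also have "{x \<in> ?K. x - h \<in> N} = (\<lambda>y. y + a) ` {y \<in> Poly_Mapping.keys p. y - (h - a) \<in> N}"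
    by (auto simp: algebra_simps)
  also have "(\<Sum>x\<in>(\<lambda>y. y + a) ` {y \<in> Poly_Mapping.keys p. y - (h - a) \<in> N}. Poly_Mapping.lookup p (x - a) * b)
      = (\<Sum>y\<in>{y \<in> Poly_Mapping.keys p. y - (h - a) \<in> N}. Poly_Mapping.lookup p y * b)"
    by (subst sum.reindex) (auto simp: inj_on_def)
  also have "\<dots> = b * sig N p (h - a)"
    unfolding sig_def by (simp add: sum_distrib_left mult.commute)
  finally show ?thesis .
qed

lemma Zl_0: "zero_in_Lambda N 0"
  by (simp add: Zl_sig sig_zero)

lemma Zl_add: "zero_in_Lambda N p \<Longrightarrow> zero_in_Lambda N q \<Longrightarrow> zero_in_Lambda N (p + q)"
  by (simp add: Zl_sig sig_add)

lemma Zl_uminus: "zero_in_Lambda N p \<Longrightarrow> zero_in_Lambda N (- p)"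
  by (simp add: Zl_sig sig_uminus)

lemma Zl_uminus_iff: "zero_in_Lambda N (- p) \<longleftrightarrow> zero_in_Lambda N p"
  by (simp add: Zl_sig sig_uminus)

lemma Zl_diff: "zero_in_Lambda N p \<Longrightarrow> zero_in_Lambda N q \<Longrightarrow> zero_in_Lambda N (p - q)"
  by (simp add: Zl_sig sig_diff)

lemma Zl_mult:
  fixes p :: "'g gring"
  assumes "zero_in_Lambda N p"
  shows "zero_in_Lambda N (p * q)"
proof (induction q rule: update_induct)
  case const
  then show ?case by (simp add: Zl_0)
next
  case (update f a b)
  then show ?case
    using assms by (simp add: update_eq_add distrib_left Zl_sig sig_add sig_mult_single)
qed

lemma Zl_mult2:
  fixes p :: "'g gring"
  shows "zero_in_Lambda N p \<Longrightarrow> zero_in_Lambda N (q * p)"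
  using Zl_mult[of N p q] by (simp add: mult.commute)

lemma Zl_grp_elt:
  assumes "\<And>h. (a - h \<in> N) = (- h \<in> N)"
  shows "zero_in_Lambda N (grp_elt a - 1)"
  using assms by (simp add: Zl_sig sig_diff grp_elt_def sig_single flip: single_one)

lemma nzd:
  fixes p :: "'g gring" and \<psi> :: "('g \<Rightarrow>\<^sub>0 int) \<Rightarrow> int"
  assumes Z: "zero_in_Lambda N (p * (grp_elt a - grp_elt b))"
    and ne: "\<psi> a \<noteq> \<psi> b"
    and add: "\<And>x y. \<psi> (x + y) = \<psi> x + \<psi> y"
    and van: "\<And>x. x \<in> N \<Longrightarrow> \<psi> x = 0"
  shows "zero_in_Lambda N p"
proof -
  have sh: "sig N p (g + (a - b)) = sig N p g" for g
  proof -
    have "sig N (p * (grp_elt a - grp_elt b)) (g + a) = 0" using Z by (simp add: Zl_sig)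
    then show ?thesis
      by (simp add: right_diff_distrib sig_diff grp_elt_def sig_mult_single algebra_simps)
  qed
  have psub: "\<psi> (x - y) = \<psi> x - \<psi> y" for x y
    using add[of "x - y" y] by simp
  define d where "d = \<psi> (a - b)"
  have d0: "d \<noteq> 0" using ne by (simp add: d_def psub)
  show ?thesis
  proof (unfold Zl_sig, rule allI, rule ccontr)
    fix h assume nz: "sig N p h \<noteq> 0"
    have it: "\<exists>g. sig N p g = sig N p h \<and> \<psi> g = \<psi> h + int n * d" for n
    proof (induction n)
      case 0 then show ?case by auto
    next
      case (Suc n)
      then obtain g where g: "sig N p g = sig N p h" "\<psi> g = \<psi> h + int n * d" by blast
      show ?case
        by (rule exI[of _ "g + (a - b)"]) (use g sh[of g] add[of g "a - b"] in \<open>simp add: d_def algebra_simps\<close>)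
    qed
    have "range (\<lambda>n. \<psi> h + int n * d) \<subseteq> \<psi> ` Poly_Mapping.keys p"
    proof
      fix z assume "z \<in> range (\<lambda>n. \<psi> h + int n * d)"
      then obtain n where z: "z = \<psi> h + int n * d" by blast
      obtain g where g: "sig N p g \<noteq> 0" "\<psi> g = z" using it[of n] nz z by metis
      then obtain x where "x \<in> Poly_Mapping.keys p" "x - g \<in> N"
        unfolding sig_def by (metis (no_types, lifting) empty_Collect_eq sum.empty)
      then show "z \<in> \<psi> ` Poly_Mapping.keys p"
      proof -
        have "\<psi> x = z" using van[of "x - g"] g psub[of x g] \<open>x - g \<in> N\<close> by simp
        then show ?thesis using \<open>x \<in> Poly_Mapping.keys p\<close> by blast
      qed
    qed
    then have "finite (range (\<lambda>n. \<psi> h + int n * d))"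
      by (rule finite_subset) simp
    moreover have "inj (\<lambda>n. \<psi> h + int n * d)"
      using d0 by (auto simp: inj_def)
    ultimately show False
      using finite_imageD infinite_UNIV_nat by blast
  qed
qed


lemma ab_word_append: "ab_word (xs @ ys) = ab_word xs + ab_word ys"
  by (simp add: ab_word_def)

lemma ab_word_Cons: "ab_word (x # xs) = ab_word [x] + ab_word xs"
  by (simp add: ab_word_def)

lemma ab_word_Nil: "ab_word [] = 0"
  by (simp add: ab_word_def)

lemma ab_word_letter: "ab_word [(g, b)] = Poly_Mapping.single g (if b then -1 else 1)"
  by (simp add: ab_word_def)

lemma grp_elt_add: "grp_elt (a + b) = grp_elt a * grp_elt b"
  by (simp add: grp_elt_def mult_single)

lemma grp_elt_0: "grp_elt 0 = 1"
  by (simp add: grp_elt_def)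

lemma grp_elt_diff: "grp_elt (a - b) * grp_elt b = grp_elt a"
  by (simp flip: grp_elt_add)

lemma fox_Nil: "fox_ab [] x = 0"
  by (simp add: fox_ab_def)

lemma fox_letter: "fox_ab [(g, b)] x = (if g = x then (if b then - grp_elt (ab_word [(g, b)]) else 1) else 0)"
  by (simp add: fox_ab_def ab_word_Nil grp_elt_0)

lemma fox_Cons: "fox_ab (y # w) x = fox_ab [y] x + grp_elt (ab_word [y]) * fox_ab w x"
proof -
  obtain g b where y: "y = (g, b)" by (cases y)
  define T where "T i = (case (y # w) ! i of (g', b') \<Rightarrow>
      if g' = x then (if b' then - grp_elt (ab_word (take (Suc i) (y # w)))
                         else grp_elt (ab_word (take i (y # w))))
      else 0)" for i
  have "fox_ab (y # w) x = (\<Sum>i<Suc (length w). T i)"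
    unfolding fox_ab_def T_def by simp
  also have "\<dots> = T 0 + (\<Sum>i<length w. T (Suc i))"
    by (rule sum.lessThan_Suc_shift)
  also have "T 0 = fox_ab [y] x"
    by (simp add: T_def fox_ab_def y)
  also have "(\<Sum>i<length w. T (Suc i)) = grp_elt (ab_word [y]) * fox_ab w x"
  proof -
    have c: "grp_elt (ab_word (y # take n w)) = grp_elt (ab_word [y]) * grp_elt (ab_word (take n w))" for n
      by (simp add: ab_word_def grp_elt_add[symmetric])
    show ?thesis
    unfolding fox_ab_def sum_distrib_left T_def
    by (rule sum.cong) (auto split: prod.splits simp: c ab_word_Nil grp_elt_0)
  qed
  finally show ?thesis .
qed

lemma fox_append: "fox_ab (w1 @ w2) x = fox_ab w1 x + grp_elt (ab_word w1) * fox_ab w2 x"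
proof (induction w1)
  case Nil
  then show ?case by (simp add: fox_Nil ab_word_Nil grp_elt_0)
next
  case (Cons y w1)
  then show ?case
    by (simp add: fox_Cons[of y "w1 @ w2"] fox_Cons[of y w1] ab_word_Cons[of y w1] grp_elt_add algebra_simps)
qed

definition Dw :: "'g set \<Rightarrow> ('g \<Rightarrow> 'g gring) \<Rightarrow> 'g word \<Rightarrow> 'g gring" where
  "Dw S c w = (\<Sum>g\<in>S. c g * fox_ab w g)"

lemma Dw_append: "Dw S c (w1 @ w2) = Dw S c w1 + grp_elt (ab_word w1) * Dw S c w2"
  by (simp add: Dw_def fox_append sum.distrib sum_distrib_left algebra_simps)

lemma Dw_Nil: "Dw S c [] = 0"
  by (simp add: Dw_def fox_Nil)

lemma Dw_pos: "finite S \<Longrightarrow> Dw S c [(g, False)] = (if g \<in> S then c g else 0)"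
  by (simp add: Dw_def fox_letter if_distrib[of "\<lambda>x. _ * x"] cong: if_cong)

lemma Dw_letter: "finite S \<Longrightarrow> Dw S c [(g, b)] =
   (if b then - grp_elt (ab_word [(g, b)]) else 1) * (if g \<in> S then c g else 0)"
  by (cases b) (simp_all add: Dw_def fox_letter if_distrib[of "\<lambda>x. _ * x"] sum_distrib_left cong: if_cong)

lemma inv_word_Cons: "inv_word (x # B) = inv_word B @ [(fst x, \<not> snd x)]"
  by (cases x) (simp add: inv_word_def)

lemma inv_word_Nil: "inv_word [] = []"
  by (simp add: inv_word_def)

lemma ab_inv: "ab_word (inv_word B) = - ab_word B"
proof (induction B)
  case Nil
  then show ?case by (simp add: inv_word_Nil ab_word_Nil)
next
  case (Cons x B)
  then show ?case
    by (cases x) (simp add: inv_word_Cons ab_word_append ab_word_def single_uminus)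
qed

lemma Dw_letter_inv: "finite S \<Longrightarrow>
  Dw S c [(g, \<not> b)] = - grp_elt (- ab_word [(g, b)]) * Dw S c [(g, b)]"
  by (cases b) (simp_all add: Dw_letter ab_word_letter grp_elt_def mult_single single_uminus mult.assoc[symmetric])

lemma Dw_inv: "finite S \<Longrightarrow> Dw S c (inv_word B) = - grp_elt (- ab_word B) * Dw S c B"
proof (induction B)
  case Nil
  then show ?case by (simp add: inv_word_Nil Dw_Nil)
next
  case (Cons x B)
  obtain g b where x: "x = (g, b)" by (cases x)
  have "Dw S c (inv_word (x # B)) = Dw S c (inv_word B) + grp_elt (- ab_word B) * Dw S c [(g, \<not> b)]"
    by (simp add: x inv_word_Cons Dw_append ab_inv)
  also have "\<dots> = - grp_elt (- ab_word B) * Dw S c B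
      - grp_elt (- ab_word B) * grp_elt (- ab_word [(g, b)]) * Dw S c [(g, b)]"
    using Cons by (simp add: Dw_letter_inv)
  also have "\<dots> = - grp_elt (- ab_word (x # B)) * Dw S c (x # B)"
    using Dw_append[of S c "[x]" B]
    by (simp add: x ab_word_Cons[of _ B] grp_elt_add[symmetric] algebra_simps)
  finally show ?case .
qed

lemma ab_rel: "ab_word (rel_word A B) = ab_word A - ab_word B"
  by (simp add: rel_word_def ab_word_append ab_inv)

lemma Dw_rel: "finite S \<Longrightarrow> Dw S c (rel_word A B) = Dw S c A - grp_elt (ab_word A - ab_word B) * Dw S c B"
proof -
  assume f: "finite S"
  have "grp_elt (ab_word A) * grp_elt (- ab_word B) = grp_elt (ab_word A - ab_word B)"
    by (simp flip: grp_elt_add)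
  then show ?thesis using f
    by (simp add: rel_word_def Dw_append Dw_inv mult.assoc[symmetric])
qed

lemma relsub_add:
  assumes "y \<in> rel_subgroup Rs" shows "x \<in> rel_subgroup Rs \<Longrightarrow> x + y \<in> rel_subgroup Rs"
  using assms
proof (induction y)
  case zero then show ?case by simp
next
  case (plus a r) then show ?case using rel_subgroup.plus[of "x + a" Rs r] by (simp add: add.assoc)
next
  case (minus a r) then show ?case using rel_subgroup.minus[of "x + a" Rs r] by (simp add: algebra_simps)
qed

lemma relsub_neg:
  assumes "y \<in> rel_subgroup Rs" shows "- y \<in> rel_subgroup Rs"
  using assms
proof (induction y)
  case zero then show ?case by (simp add: rel_subgroup.zero)
next
  case (plus a r) then show ?case using rel_subgroup.minus[of "- a" Rs r] by (simp add: algebra_simps)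
next
  case (minus a r) then show ?case using rel_subgroup.plus[of "- a" Rs r] by (simp add: algebra_simps)
qed

lemma relsub_gen: "r \<in> Rs \<Longrightarrow> ab_word r \<in> rel_subgroup Rs"
  using rel_subgroup.plus[OF rel_subgroup.zero] by simp

lemma relsub_shift:
  assumes "a \<in> rel_subgroup Rs"
  shows "(a - h \<in> rel_subgroup Rs) = (- h \<in> rel_subgroup Rs)"
proof
  assume h: "a - h \<in> rel_subgroup Rs"
  show "- h \<in> rel_subgroup Rs" using relsub_add[OF h relsub_neg[OF assms]] by simp
next
  assume h: "- h \<in> rel_subgroup Rs"
  show "a - h \<in> rel_subgroup Rs" using relsub_add[OF assms h] by (simp add: algebra_simps)
qed

lemma rel_eq:
  assumes fin: "finite S" and r: "rel_word A B \<in> Rs"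
    and Z: "zero_in_Lambda (rel_subgroup Rs) (Dw S c (rel_word A B))"
  shows "zero_in_Lambda (rel_subgroup Rs) (Dw S c A - Dw S c B)"
proof -
  have mem: "ab_word A - ab_word B \<in> rel_subgroup Rs"
    using relsub_gen[OF r] by (simp add: ab_rel)
  have "Dw S c A - Dw S c B = Dw S c (rel_word A B) + (grp_elt (ab_word A - ab_word B) - 1) * Dw S c B"
    using fin by (simp add: Dw_rel algebra_simps)
  then show ?thesis
    using Zl_add[OF Z Zl_mult[OF Zl_grp_elt[OF relsub_shift[OF mem]]]] by simp
qed

lemma psi_vanish:
  assumes add: "\<And>x y. \<psi> (x + y) = \<psi> x + \<psi> y"
    and gen: "\<And>r. r \<in> Rs \<Longrightarrow> \<psi> (ab_word r) = (0::int)"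
    and x: "x \<in> rel_subgroup Rs"
  shows "\<psi> x = 0"
  using x
proof (induction x)
  case zero then show ?case using add[of 0 0] by simp
next
  case (plus a r) then show ?case using add gen by simp
next
  case (minus a r) then show ?case using add[of "a - ab_word r" "ab_word r"] gen by simp
qed


fun ntimes :: "nat \<Rightarrow> 'a::monoid_add \<Rightarrow> 'a" where
  "ntimes 0 a = 0"
| "ntimes (Suc n) a = a + ntimes n a"

lemma grp_elt_pow: "grp_elt a ^ n = grp_elt (ntimes n a)"
  by (induction n) (simp_all add: grp_elt_0 grp_elt_add)

lemma psi_ntimes:
  assumes add: "\<And>x y. \<psi> (x + y) = \<psi> x + \<psi> y"
  shows "\<psi> (ntimes n a) = int n * (\<psi> a :: int)"
proof (induction n)
  case 0 then show ?case using add[of 0 0] by simp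
next
  case (Suc n) then show ?case by (simp add: add algebra_simps)
qed

lemma pos_pow_Suc: "pos_pow (Suc l) gs = map (\<lambda>g. (g, False)) gs @ pos_pow l gs"
  by (simp add: pos_pow_def)

lemma pos_pow_0: "pos_pow 0 gs = []"
  by (simp add: pos_pow_def)

lemma Dw_pos_pow:
  "Dw S c (pos_pow l gs) = (\<Sum>j<l. grp_elt (ab_word (map (\<lambda>g. (g, False)) gs)) ^ j)
       * Dw S c (map (\<lambda>g. (g, False)) gs)"
proof (induction l)
  case 0 then show ?case by (simp add: pos_pow_0 Dw_Nil)
next
  case (Suc l)
  then show ?case
    by (simp add: pos_pow_Suc Dw_append sum.lessThan_Suc_shift sum_distrib_left algebra_simps
        del: sum.lessThan_Suc)
qed

lemma ab_pos_pow: "ab_word (pos_pow l gs) = ntimes l (ab_word (map (\<lambda>g. (g, False)) gs))"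
  by (induction l) (simp_all add: pos_pow_0 pos_pow_Suc ab_word_append ab_word_Nil)

lemma ab_two: "ab_word [(a, False), (b, False)] = Poly_Mapping.single a 1 + Poly_Mapping.single b 1"
  by (simp add: ab_word_def)

lemma ab_comm_rel: "ab_word (rel_word (pos_pow l [a, b]) (pos_pow l [b, a])) = 0"
  by (simp add: ab_rel ab_pos_pow ab_two add.commute)

lemma geom: "(1 - x) * (\<Sum>j<l. x ^ j) = 1 - (x::'a::comm_ring_1) ^ l"
  by (simp add: one_diff_power_eq)

lemma comm_step:
  fixes \<psi> :: "('g \<Rightarrow>\<^sub>0 int) \<Rightarrow> int"
  assumes fin: "finite S" and bS: "b \<in> S"
    and rel: "zero_in_Lambda N (Dw S c (pos_pow l [a, b]) - Dw S c (pos_pow l [b, a]))"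
    and l: "1 \<le> l"
    and add: "\<And>x y. \<psi> (x + y) = \<psi> x + \<psi> y"
    and van: "\<And>x. x \<in> N \<Longrightarrow> \<psi> x = 0"
    and pa: "\<psi> (Poly_Mapping.single a 1) \<noteq> 0"
    and pb: "\<psi> (Poly_Mapping.single b 1) = 0"
    and Za: "zero_in_Lambda N (Dw S c [(a, False)])"
  shows "zero_in_Lambda N (c b)"
proof -
  define sa where "sa = Poly_Mapping.single a (1::int)"
  define sb where "sb = Poly_Mapping.single b (1::int)"
  define X where "X = grp_elt (sa + sb)"
  define Q where "Q = (\<Sum>j<l. X ^ j)"
  have ab1: "ab_word (map (\<lambda>g. (g, False)) [a, b]) = sa + sb"
    by (simp add: ab_word_def sa_def sb_def)
  have ab2: "ab_word (map (\<lambda>g. (g, False)) [b, a]) = sa + sb"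
    by (simp add: ab_word_def sa_def sb_def add.commute)
  define da where "da = Dw S c [(a, False)]"
  have D1: "Dw S c (map (\<lambda>g. (g, False)) [a, b]) = da + grp_elt sa * c b"
    using Dw_append[of S c "[(a, False)]" "[(b, False)]"] fin bS unfolding da_def
    by (simp add: Dw_pos ab_word_letter sa_def)
  have D2: "Dw S c (map (\<lambda>g. (g, False)) [b, a]) = c b + grp_elt sb * da"
    using Dw_append[of S c "[(b, False)]" "[(a, False)]"] fin bS unfolding da_def
    by (simp add: Dw_pos ab_word_letter sb_def)
  have eq: "Dw S c (pos_pow l [a, b]) - Dw S c (pos_pow l [b, a])
      = (Q * c b) * (grp_elt sa - grp_elt 0) + (Q * (1 - grp_elt sb)) * da"
    unfolding Dw_pos_pow ab1 ab2 D1 D2 Q_def X_def by (simp add: grp_elt_0 algebra_simps)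
  have "zero_in_Lambda N ((Q * c b) * (grp_elt sa - grp_elt 0))"
  proof -
    have "(Q * c b) * (grp_elt sa - grp_elt 0) = (Dw S c (pos_pow l [a, b]) - Dw S c (pos_pow l [b, a]))
        - (Q * (1 - grp_elt sb)) * da" using eq by simp
    then show ?thesis using Zl_diff[OF rel Zl_mult2[OF Za[folded da_def]]] by simp
  qed
  moreover have "\<psi> sa \<noteq> \<psi> 0" using pa add[of 0 0] by (simp add: sa_def)
  ultimately have ZQ: "zero_in_Lambda N (Q * c b)"
    by (rule nzd[where N=N and \<psi>=\<psi>]) (simp_all add: add van)
  have "c b * (grp_elt 0 - grp_elt (ntimes l (sa + sb))) = (1 - X) * (Q * c b)"
  proof -
    have "(1 - X) * (Q * c b) = ((1 - X) * Q) * c b" by (simp only: mult.assoc)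
    also have "(1 - X) * Q = 1 - X ^ l" unfolding Q_def by (rule geom)
    also have "X ^ l = grp_elt (ntimes l (sa + sb))" unfolding X_def by (rule grp_elt_pow)
    finally show ?thesis by (simp add: grp_elt_0 mult.commute)
  qed
  then have "zero_in_Lambda N (c b * (grp_elt 0 - grp_elt (ntimes l (sa + sb))))"
    using Zl_mult2[OF ZQ] by simp
  then show ?thesis
  proof (rule nzd[where N=N and \<psi>=\<psi>])
    have "\<psi> (ntimes l (sa + sb)) = int l * \<psi> sa"
      using psi_ntimes[OF add] add pb by (simp add: sb_def)
    moreover have "\<psi> 0 = 0" using add[of 0 0] by simp
    ultimately show "\<psi> 0 \<noteq> \<psi> (ntimes l (sa + sb))" using pa l by (simp add: sa_def)
  qed (simp_all add: add van)
qed


lemma Dw_Cons: "Dw S c (x # w) = Dw S c [x] + grp_elt (ab_word [x]) * Dw S c w"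
  using Dw_append[of S c "[x]" w] by simp

lemma Dw_rep_U: "finite S \<Longrightarrow> Ubar \<notin> S \<Longrightarrow> Dw S c (replicate q (Ubar, b)) = 0"
  by (induction q) (simp_all add: Dw_Nil Dw_Cons[of S c _ "replicate _ _"] Dw_letter)

lemma ab_rep: "ab_word (replicate q (g, b)) = Poly_Mapping.single g (if b then - int q else int q)"
  by (induction q) (auto simp: ab_word_def single_add[symmetric] single_uminus[symmetric] algebra_simps)

lemma ab_word_Cons_rep: "ab_word (x # replicate q y) = ab_word [x] + ab_word (replicate q y)"
  by (simp add: ab_word_def)

lemma Dw_Cons_rep: "Dw S c (x # replicate q y) = Dw S c [x] + grp_elt (ab_word [x]) * Dw S c (replicate q y)"
  by (rule Dw_Cons)

lemma ab_Wj: "ab_word (Wj_word k w j) = Poly_Mapping.single (Wg w (j mod k)) 1"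
  by (simp add: Wj_word_def ab_word_append ab_word_Cons_rep ab_rep ab_word_letter single_uminus)

lemma Dw_Wj:
  assumes "finite S" "Ubar \<notin> S" "Wg w (j mod k) \<in> S"
  shows "Dw S c (Wj_word k w j) = grp_elt (Poly_Mapping.single Ubar (int (j div k))) * c (Wg w (j mod k))"
  using assms by (simp add: Wj_word_def Dw_append Dw_Cons_rep Dw_rep_U Dw_pos ab_rep)

lemma ab_concat_map: "ab_word (concat (map f xs)) = (\<Sum>x\<leftarrow>xs. ab_word (f x))"
  by (induction xs) (simp_all add: ab_word_Nil ab_word_append)

context
  fixes S :: "'v gen set" and c :: "'v gen \<Rightarrow> 'v gen gring" and N k w l
  assumes finS: "finite S" and UnS: "Ubar \<notin> S" and WS: "\<And>s. s < k \<Longrightarrow> Wg w s \<in> S"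
    and kpos: "0 < k" and lpos: "1 \<le> l"
    and psiU: "\<And>x. x \<in> N \<Longrightarrow> Poly_Mapping.lookup x Ubar = 0"
    and rel: "\<And>i. i < k \<Longrightarrow> zero_in_Lambda N (Dw S c (concat (map (Wj_word k w) [i..<i + l]))
                 - Dw S c (concat (map (Wj_word k w) [i + 1..<i + l + 1])))"
begin

definition pre :: "nat \<Rightarrow> 'v gen \<Rightarrow>\<^sub>0 int" where
  "pre n = (\<Sum>t<n. Poly_Mapping.single (Wg w (t mod k)) 1)"

definition ee :: "nat \<Rightarrow> 'v gen gring" where
  "ee j = grp_elt (pre j + Poly_Mapping.single Ubar (int (j div k))) * c (Wg w (j mod k))"

definition EE :: "nat \<Rightarrow> 'v gen gring" where
  "EE i = (\<Sum>j\<in>{i..<i + l}. ee j)"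

definition Y1 where "Y1 = pre k + Poly_Mapping.single Ubar 1"

lemma pre_Suc: "pre (Suc n) = pre n + Poly_Mapping.single (Wg w (n mod k)) 1"
  by (simp add: pre_def)

lemma pre_0: "pre 0 = 0"
  by (simp add: pre_def)

lemma ab_block: "ab_word (concat (map (Wj_word k w) [a..<a + d])) = pre (a + d) - pre a"
  by (induction d) (simp_all add: ab_word_Nil ab_word_append ab_Wj pre_Suc)

lemma block: "grp_elt (pre a) * Dw S c (concat (map (Wj_word k w) [a..<a + d])) = (\<Sum>j\<in>{a..<a + d}. ee j)"
proof (induction d)
  case 0
  then show ?case by (simp add: Dw_Nil)
next
  case (Suc d)
  have m: "Wg w ((a + d) mod k) \<in> S" using WS kpos by simp
  have g: "grp_elt (pre a) * (grp_elt (pre (a + d) - pre a) * (grp_elt u * x))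
      = grp_elt (pre (a + d) + u) * x" for u x
    by (simp add: mult.assoc[symmetric] grp_elt_add[symmetric] algebra_simps)
  show ?case
    using Suc m
    by (simp add: Dw_append ab_block Dw_Wj[OF finS UnS] distrib_left g ee_def)
qed

lemma rel_i:
  assumes i: "i < k"
  shows "zero_in_Lambda N (grp_elt (Poly_Mapping.single (Wg w (i mod k)) 1) * EE i - EE (Suc i))"
proof -
  have Z: "zero_in_Lambda N (grp_elt (pre (Suc i)) * (Dw S c (concat (map (Wj_word k w) [i..<i + l]))
                 - Dw S c (concat (map (Wj_word k w) [i + 1..<i + l + 1]))))"
    by (rule Zl_mult2[OF rel[OF i]])
  have A: "grp_elt (pre (Suc i)) * Dw S c (concat (map (Wj_word k w) [i..<i + l]))
     = grp_elt (Poly_Mapping.single (Wg w (i mod k)) 1) * EE i"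
  proof -
    have "grp_elt (pre (Suc i)) = grp_elt (Poly_Mapping.single (Wg w (i mod k)) 1) * grp_elt (pre i)"
      by (simp add: pre_Suc grp_elt_add mult.commute)
    then show ?thesis using block[of i l] by (simp add: EE_def mult.assoc)
  qed
  have eqB: "[i + 1..<i + l + 1] = [Suc i..<Suc i + l]" by simp
  have B: "grp_elt (pre (Suc i)) * Dw S c (concat (map (Wj_word k w) [i + 1..<i + l + 1])) = EE (Suc i)"
    by (simp only: eqB block EE_def)
  show ?thesis using Z unfolding right_diff_distrib A B .
qed

lemma pre_add: "pre (j + k) = pre k + pre j"
  by (induction j) (simp_all add: pre_0 pre_Suc[of "_ + k"] pre_Suc add.assoc)

lemma ee_period: "ee (j + k) = grp_elt Y1 * ee j"
proof -
  have "(j + k) div k = Suc (j div k)" using kpos by simp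
  moreover have "(j + k) mod k = j mod k" by simp
  moreover have "pre (j + k) + Poly_Mapping.single Ubar (int (Suc q))
     = Y1 + (pre j + Poly_Mapping.single Ubar (int q))" for q
    by (simp add: pre_add Y1_def single_add add_ac)
  ultimately show ?thesis
    unfolding ee_def by (simp only: grp_elt_add mult.assoc)
qed

lemma EE_period: "EE (i + k) = grp_elt Y1 * EE i"
proof -
  have "EE (i + k) = (\<Sum>j\<in>{i + k..<(i + l) + k}. ee j)" by (simp add: EE_def algebra_simps)
  also have "\<dots> = (\<Sum>j\<in>{i..<i + l}. ee (j + k))" by (rule sum.shift_bounds_nat_ivl)
  also have "\<dots> = grp_elt Y1 * EE i" by (simp add: EE_def ee_period sum_distrib_left)
  finally show ?thesis .
qed

lemma EE_chain: "n \<le> k \<Longrightarrow> zero_in_Lambda N (EE n - grp_elt (pre n) * EE 0)"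
proof (induction n)
  case 0
  then show ?case by (simp add: pre_0 grp_elt_0 Zl_0)
next
  case (Suc n)
  then have n: "n < k" by simp
  have "EE (Suc n) - grp_elt (pre (Suc n)) * EE 0
     = - (grp_elt (Poly_Mapping.single (Wg w (n mod k)) 1) * EE n - EE (Suc n))
       + grp_elt (Poly_Mapping.single (Wg w (n mod k)) 1) * (EE n - grp_elt (pre n) * EE 0)"
    by (simp add: pre_Suc grp_elt_add algebra_simps)
  moreover have "n \<le> k" using n by simp
  ultimately show ?case
    by (subst (asm) eq_commute, simp only:) (rule Zl_add[OF Zl_uminus[OF rel_i[OF n]] Zl_mult2[OF Suc.IH]])
qed

lemma psiU_add: "Poly_Mapping.lookup (x + y) Ubar = Poly_Mapping.lookup x Ubar + Poly_Mapping.lookup y Ubar"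
  by (simp add: lookup_add)

lemma psiU_pre: "Poly_Mapping.lookup (pre n) Ubar = 0"
  by (simp add: pre_def lookup_sum lookup_single)

lemma EE0: "zero_in_Lambda N (EE 0)"
proof -
  have "EE k = grp_elt Y1 * EE 0" using EE_period[of 0] by simp
  then have "zero_in_Lambda N (EE 0 * (grp_elt Y1 - grp_elt (pre k)))"
    using EE_chain[of k] by (simp add: algebra_simps)
  then show ?thesis
  proof (rule nzd[where \<psi> = "\<lambda>x. Poly_Mapping.lookup x Ubar"])
    show "Poly_Mapping.lookup Y1 Ubar \<noteq> Poly_Mapping.lookup (pre k) Ubar"
      by (simp add: Y1_def psiU_add psiU_pre)
  qed (simp_all add: psiU_add psiU)
qed

lemma EE_all: "zero_in_Lambda N (EE n)"
proof (induction n rule: less_induct)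
  case (less n)
  show ?case
  proof (cases "n < k")
    case True
    have e: "EE n = (EE n - grp_elt (pre n) * EE 0) + grp_elt (pre n) * EE 0" by simp
    show ?thesis by (subst e) (rule Zl_add[OF EE_chain Zl_mult2[OF EE0]], use True in simp)
  next
    case False
    then have "n = (n - k) + k" by simp
    then have "EE n = grp_elt Y1 * EE (n - k)" using EE_period[of "n - k"] by simp
    then show ?thesis using Zl_mult2[OF less[of "n - k"]] False kpos by simp
  qed
qed

lemma ee_step: "zero_in_Lambda N (ee (i + l) - ee i)"
proof -
  have "(\<Sum>j\<in>{i..<Suc (i + l)}. ee j) = ee i + EE (Suc i)"
    by (simp add: EE_def sum.atLeast_Suc_lessThan)
  moreover have "(\<Sum>j\<in>{i..<Suc (i + l)}. ee j) = EE i + ee (i + l)"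
    by (simp add: EE_def)
  ultimately have "ee (i + l) - ee i = EE (Suc i) - EE i" by (simp add: algebra_simps)
  then show ?thesis using Zl_diff[OF EE_all EE_all] by simp
qed

lemma ee_multi: "zero_in_Lambda N (ee (i + n * l) - ee i)"
proof (induction n)
  case 0 then show ?case by (simp add: Zl_0)
next
  case (Suc n)
  have "ee (i + Suc n * l) - ee i = (ee ((i + n * l) + l) - ee (i + n * l)) + (ee (i + n * l) - ee i)"
    by (simp add: algebra_simps)
  then show ?case by (simp only:) (rule Zl_add[OF ee_step Suc.IH])
qed

lemma ee_kper: "ee (i + n * k) = grp_elt Y1 ^ n * ee i"
proof (induction n)
  case 0 then show ?case by simp
next
  case (Suc n)
  have "ee (i + Suc n * k) = ee ((i + n * k) + k)" by (simp add: algebra_simps)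
  then show ?case using Suc by (simp add: ee_period)
qed

lemma ee_zero: "zero_in_Lambda N (ee i)"
proof -
  have "ee (i + k * l) = grp_elt (ntimes l Y1) * ee i"
    using ee_kper[of i l] by (simp add: grp_elt_pow mult.commute)
  then have "zero_in_Lambda N (ee i * (grp_elt (ntimes l Y1) - grp_elt 0))"
    using ee_multi[of i k] by (simp add: grp_elt_0 algebra_simps)
  then show ?thesis
  proof (rule nzd[where \<psi> = "\<lambda>x. Poly_Mapping.lookup x Ubar"])
    have "Poly_Mapping.lookup (ntimes l Y1) Ubar = int l * Poly_Mapping.lookup Y1 Ubar"
      by (rule psi_ntimes) (simp add: psiU_add)
    then show "Poly_Mapping.lookup (ntimes l Y1) Ubar \<noteq> Poly_Mapping.lookup 0 Ubar"
      using lpos by (simp add: Y1_def psiU_add psiU_pre)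
  qed (simp_all add: psiU_add psiU)
qed

lemma c_zero:
  assumes s: "s < k"
  shows "zero_in_Lambda N (c (Wg w s))"
proof -
  have "ee s = grp_elt (pre s) * c (Wg w s)" using s by (simp add: ee_def)
  then have "c (Wg w s) = grp_elt (- pre s) * ee s"
    by (simp add: mult.assoc[symmetric] grp_elt_add[symmetric] grp_elt_0)
  then show ?thesis using Zl_mult2[OF ee_zero] by simp
qed

end


lemma psi_sub:
  fixes \<psi> :: "('g \<Rightarrow>\<^sub>0 int) \<Rightarrow> int"
  assumes add: "\<And>x y. \<psi> (x + y) = \<psi> x + (\<psi> y :: int)"
  shows "\<psi> (x - y) = \<psi> x - \<psi> y" "\<psi> 0 = 0"
  using add[of "x - y" y] add[of 0 0] by simp_all

lemma psi_Wblock: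
  assumes add: "\<And>x y. \<psi> (x + y) = \<psi> x + (\<psi> y :: int)"
    and kap: "\<And>s. s < k \<Longrightarrow> \<psi> (Poly_Mapping.single (Wg w s) 1) = \<kappa>"
    and k: "0 < k"
  shows "\<psi> (ab_word (concat (map (Wj_word k w) xs))) = int (length xs) * \<kappa>"
proof (induction xs)
  case Nil then show ?case by (simp add: ab_word_Nil psi_sub[OF add])
next
  case (Cons x xs)
  then show ?case using k by (simp add: ab_word_append ab_Wj add kap algebra_simps)
qed

lemma rel_shapes:
  assumes "r \<in> relators V E m u k"
  shows "(\<exists>l a b. r = rel_word (pos_pow l [a, b]) (pos_pow l [b, a])) \<or>
    (\<exists>w i l. r = rel_word (concat (map (Wj_word k w) [i..<i + l])) (concat (map (Wj_word k w) [i + 1..<i + l + 1])))"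
proof -
  have t1: "rel_word [(Vg v, False), (Ubar, False)] [(Ubar, False), (Vg v, False)]
      = rel_word (pos_pow 1 [Vg v, Ubar]) (pos_pow 1 [Ubar, Vg v])" for v :: 'a
    by (simp add: pos_pow_def)
  show ?thesis using assms unfolding relators_def Let_def
    by (elim UnE CollectE exE conjE; (simp only: t1)?; blast)
qed

lemma psi_rel_zero:
  assumes add: "\<And>x y. \<psi> (x + y) = \<psi> x + (\<psi> y :: int)"
    and kap: "\<And>w s. s < k \<Longrightarrow> \<psi> (Poly_Mapping.single (Wg w s) 1) = \<psi> (Poly_Mapping.single (Wg w 0) 1)"
    and k: "0 < k"
    and r: "r \<in> relators V E m u k"
  shows "\<psi> (ab_word r) = 0"
  using rel_shapes[OF r]
proof
  assume "\<exists>l a b. r = rel_word (pos_pow l [a, b]) (pos_pow l [b, a])"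
  then show ?thesis using psi_sub[OF add] by (auto simp: ab_comm_rel)
next
  assume "\<exists>w i l. r = rel_word (concat (map (Wj_word k w) [i..<i + l])) (concat (map (Wj_word k w) [i + 1..<i + l + 1]))"
  then obtain w i l where r: "r = rel_word (concat (map (Wj_word k w) [i..<i + l])) (concat (map (Wj_word k w) [i + 1..<i + l + 1]))"
    by blast
  show ?thesis
    unfolding r ab_rel psi_sub(1)[OF add]
    by (simp add: psi_Wblock[OF add kap k])
qed

lemma psi_N_zero:
  assumes add: "\<And>x y. \<psi> (x + y) = \<psi> x + (\<psi> y :: int)"
    and kap: "\<And>w s. s < k \<Longrightarrow> \<psi> (Poly_Mapping.single (Wg w s) 1) = \<psi> (Poly_Mapping.single (Wg w 0) 1)"
    and k: "0 < k"
    and x: "x \<in> rel_subgroup (relators V E m u k)"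
  shows "\<psi> x = 0"
  by (rule psi_vanish[OF add _ x]) (rule psi_rel_zero[OF add kap k])

definition psiW :: "nat \<Rightarrow> 'v \<Rightarrow> ('v gen \<Rightarrow>\<^sub>0 int) \<Rightarrow> int" where
  "psiW k x0 a = (\<Sum>j<k. Poly_Mapping.lookup a (Wg x0 j))"

lemma psiW_add: "psiW k x0 (a + b) = psiW k x0 a + psiW k x0 b"
  by (simp add: psiW_def lookup_add sum.distrib)

lemma psiW_single: "psiW k x0 (Poly_Mapping.single g 1) = (if \<exists>j<k. g = Wg x0 j then 1 else 0)"
proof (cases "\<exists>j<k. g = Wg x0 j")
  case True
  then obtain j where j: "j < k" "g = Wg x0 j" by blast
  have "psiW k x0 (Poly_Mapping.single g 1) = (\<Sum>j'<k. if j' = j then 1 else 0)"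
    unfolding psiW_def by (rule sum.cong) (auto simp: j lookup_single when_def)
  also have "\<dots> = 1" using j by simp
  finally show ?thesis using True by simp
next
  case False
  then show ?thesis by (auto simp: psiW_def lookup_single when_def intro!: sum.neutral)
qed

lemma edge_facts:
  assumes G: "even_labeled_graph V E m" and e: "{a, b} \<in> E"
  shows "a \<in> V" "b \<in> V" "a \<noteq> b" "1 \<le> half_label m {a, b}"
proof -
  have G1: "\<forall>e\<in>E. \<exists>x y. e = {x, y} \<and> x \<noteq> y \<and> x \<in> V \<and> y \<in> V"
    using G unfolding even_labeled_graph_def by (elim conjE)
  have G2: "\<forall>e\<in>E. even (m e) \<and> 2 \<le> m e"
    using G unfolding even_labeled_graph_def by (elim conjE)
  obtain x y where xy: "{a, b} = {x, y}" "x \<noteq> y" "x \<in> V" "y \<in> V"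
    using bspec[OF G1 e] by (elim exE conjE) (rule that)
  have ab: "a \<in> {x, y}" "b \<in> {x, y}" "x \<in> {a, b}" "y \<in> {a, b}" using xy(1) by blast+
  then show "a \<in> V" "b \<in> V" using xy by blast+
  show "a \<noteq> b" using ab xy(2) by blast
  have "2 \<le> m {a, b}" using bspec[OF G2 e] by (rule conjunct2)
  then show "1 \<le> half_label m {a, b}" by (simp add: half_label_def)
qed

lemma gens_finite: "finite V \<Longrightarrow> finite (gens V E m u k)"
proof -
  assume f: "finite V"
  have "{Wg w i | w i. w \<in> Wu V E m u \<and> i < k} = (\<lambda>(w, i). Wg w i) ` (Wu V E m u \<times> {..<k})"
    by auto
  moreover have "finite (Wu V E m u)" using f by (simp add: Wu_def)
  moreover have "finite (V2u V E m u)" using f by (simp add: V2u_def)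
  ultimately show ?thesis by (simp add: gens_def)
qed


lemma main_indep:
  fixes V :: "'v::linorder set" and E :: "'v set set" and m :: "'v set \<Rightarrow> nat"
    and u :: 'v and k :: nat
  assumes G: "even_labeled_graph V E m" and conn: "graph_connected V E" and uV: "u \<in> V" and k2: "2 \<le> k"
  shows "cols_independent (rel_subgroup (relators V E m u k)) (relators V E m u k) (\<lambda>r g. fox_ab r g)
           (gens V E m u k - {Ubar})"
proof -
  define Rs where "Rs = relators V E m u k"
  define N where "N = rel_subgroup Rs"
  define S where "S = gens V E m u k - {Ubar}"
  define V2 where "V2 = V2u V E m u"
  define W where "W = Wu V E m u"
  have finV: "finite V" using G by (simp add: even_labeled_graph_def)
  have finS: "finite S" unfolding S_def using gens_finite[OF finV] by simp
  have UnS: "Ubar \<notin> S" by (simp add: S_def)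
  have V2S: "Vg v \<in> S" if "v \<in> V2" for v using that by (simp add: S_def gens_def V2_def)
  have WS: "Wg w s \<in> S" if "w \<in> W" "s < k" for w s using that by (auto simp: S_def gens_def W_def)
  have kpos: "0 < k" using k2 by simp
  have vanU: "Poly_Mapping.lookup x Ubar = 0" if "x \<in> N" for x
    using that unfolding N_def Rs_def
    by (rule psi_N_zero[where \<psi> = "\<lambda>x. Poly_Mapping.lookup x Ubar", rotated 3])
       (simp_all add: lookup_add lookup_single kpos)
  have vanV: "Poly_Mapping.lookup x (Vg v) = 0" if "x \<in> N" for x v
    using that unfolding N_def Rs_def
    by (rule psi_N_zero[where \<psi> = "\<lambda>x. Poly_Mapping.lookup x (Vg v)", rotated 3])
       (simp_all add: lookup_add lookup_single kpos)
  have vanW: "psiW k x0 x = 0" if "x \<in> N" for x x0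
    using that unfolding N_def Rs_def
    by (rule psi_N_zero[where \<psi> = "psiW k x0", rotated 3])
       (auto simp: psiW_add psiW_single kpos)
  have t1: "rel_word [(Vg v, False), (Ubar, False)] [(Ubar, False), (Vg v, False)] \<in> Rs"
    if "v \<in> V2" for v
    using that unfolding Rs_def relators_def Let_def V2_def by blast
  have t3: "rel_word (pos_pow (half_label m {v, w}) [Vg v, Wg w i]) (pos_pow (half_label m {v, w}) [Wg w i, Vg v]) \<in> Rs"
    if "v \<in> V2" "w \<in> W" "{v, w} \<in> E" "i < k" for v w i
    using that unfolding Rs_def relators_def Let_def V2_def W_def by blast
  have t4: "rel_word (pos_pow (half_label m {w, w'}) [Wg w i, Wg w' i]) (pos_pow (half_label m {w, w'}) [Wg w' i, Wg w i]) \<in> Rs"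
    if "w \<in> W" "w' \<in> W" "w < w'" "{w, w'} \<in> E" "i < k" for w w' i
    using that unfolding Rs_def relators_def Let_def W_def by blast
  have t5: "rel_word (concat (map (Wj_word k w) [i..<i + half_label m {u, w}]))
                 (concat (map (Wj_word k w) [i + 1..<i + half_label m {u, w} + 1])) \<in> Rs"
    if "w \<in> W" "{u, w} \<in> E" "i < k" for w i
    using that unfolding Rs_def relators_def Let_def W_def by blast
  show ?thesis
    unfolding cols_independent_def Rs_def[symmetric] N_def[symmetric] S_def[symmetric]
  proof (intro allI impI ballI)
    fix c :: "'v gen \<Rightarrow> 'v gen gring" and g
    assume H: "\<forall>r\<in>Rs. zero_in_Lambda N (\<Sum>g\<in>S. c g * fox_ab r g)" and gS: "g \<in> S"
    have HD: "zero_in_Lambda N (Dw S c r)" if "r \<in> Rs" for r using H that by (simp add: Dw_def)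
    have releq: "zero_in_Lambda N (Dw S c A - Dw S c B)" if r: "rel_word A B \<in> Rs" for A B
      unfolding N_def by (rule rel_eq[OF finS r HD[OF r, unfolded N_def]])
    have swap: "zero_in_Lambda N (q - p)" if "zero_in_Lambda N (p - q)" for p q
      using Zl_uminus[OF that] by simp
    have DU: "Dw S c [(Ubar, False)] = 0" using UnS by (simp add: Dw_pos finS)
    have Dp: "Dw S c [(x, False)] = c x" if "x \<in> S" for x using that by (simp add: Dw_pos finS)
    have V2good: "zero_in_Lambda N (c (Vg v))" if v: "v \<in> V2" for v
    proof -
      have "zero_in_Lambda N (Dw S c (pos_pow 1 [Vg v, Ubar]) - Dw S c (pos_pow 1 [Ubar, Vg v]))"
        using releq[OF t1[OF v]] by (simp add: pos_pow_def)
      then have r: "zero_in_Lambda N (Dw S c (pos_pow 1 [Ubar, Vg v]) - Dw S c (pos_pow 1 [Vg v, Ubar]))"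
        by (rule swap)
      show ?thesis
        by (rule comm_step[where \<psi> = "\<lambda>x. Poly_Mapping.lookup x Ubar", OF finS V2S[OF v] r])
           (simp_all add: lookup_add vanU DU Zl_0 lookup_single)
    qed
    have stepg: "z \<in> W \<longrightarrow> (\<forall>i<k. zero_in_Lambda N (c (Wg z i)))"
      if yV: "y \<in> V" and gy: "y \<in> W \<longrightarrow> (\<forall>i<k. zero_in_Lambda N (c (Wg y i)))"
        and e: "{y, z} \<in> E" for y z
    proof (intro impI allI)
      fix i assume zW: "z \<in> W" and i: "i < k"
      have lz: "1 \<le> half_label m {y, z}" and yz: "y \<noteq> z" using edge_facts[OF G e] by auto
      have "y = u \<or> y \<in> V2 \<or> y \<in> W" using yV by (auto simp: W_def Wu_def V2_def)
      then show "zero_in_Lambda N (c (Wg z i))"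
      proof (elim disjE)
        assume "y = u"
        then have euz: "{u, z} \<in> E" using e by simp
        have R5: "zero_in_Lambda N (Dw S c (concat (map (Wj_word k z) [i'..<i' + half_label m {u, z}]))
                 - Dw S c (concat (map (Wj_word k z) [i' + 1..<i' + half_label m {u, z} + 1])))"
          if "i' < k" for i'
          by (rule releq, rule t5[OF zW euz that])
        show ?thesis
          by (rule c_zero[where S=S and c=c and N=N and k=k and w=z and l="half_label m {u, z}"])
             (use finS UnS WS[OF zW] kpos edge_facts(4)[OF G euz] vanU R5 i in auto)
      next
        assume yV2: "y \<in> V2"
        have r: "zero_in_Lambda N (Dw S c (pos_pow (half_label m {y, z}) [Vg y, Wg z i])
               - Dw S c (pos_pow (half_label m {y, z}) [Wg z i, Vg y]))"
          by (rule releq, rule t3[OF yV2 zW e i])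
        show ?thesis
          by (rule comm_step[where \<psi> = "\<lambda>x. Poly_Mapping.lookup x (Vg y)", OF finS WS[OF zW i] r lz])
             (simp_all add: lookup_add vanV lookup_single Dp[OF V2S[OF yV2]] V2good[OF yV2])
      next
        assume yW: "y \<in> W"
        have Zy: "zero_in_Lambda N (Dw S c [(Wg y i, False)])"
          using gy yW i Dp[OF WS[OF yW i]] by simp
        have r: "zero_in_Lambda N (Dw S c (pos_pow (half_label m {y, z}) [Wg y i, Wg z i])
               - Dw S c (pos_pow (half_label m {y, z}) [Wg z i, Wg y i]))"
        proof (cases "y < z")
          case True
          show ?thesis by (rule releq, rule t4[OF yW zW True e i])
        next
          case False
          then have zy: "z < y" using yz by simp
          have e': "{z, y} \<in> E" using e by (simp add: insert_commute)
          have "{z, y} = {y, z}" by (simp add: insert_commute)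
          then show ?thesis using swap[OF releq[OF t4[OF zW yW zy e' i]]] by simp
        qed
        show ?thesis
          by (rule comm_step[where \<psi> = "psiW k y", OF finS WS[OF zW i] r lz])
             (use yz i in \<open>simp_all add: psiW_add vanW psiW_single Zy\<close>)
      qed
    qed
    have reach: "x \<in> V \<and> (x \<in> W \<longrightarrow> (\<forall>i<k. zero_in_Lambda N (c (Wg x i))))"
      if "(u, x) \<in> {(a, b). {a, b} \<in> E}\<^sup>*" for x
      using that
    proof (induction rule: rtrancl_induct)
      case base
      then show ?case using uV by (simp add: W_def Wu_def)
    next
      case (step y z)
      then have e: "{y, z} \<in> E" by simp
      show ?case using step.IH stepg[OF _ _ e] edge_facts(2)[OF G e] by blast
    qed
    have "(\<exists>v. g = Vg v \<and> v \<in> V2) \<or> (\<exists>w i. g = Wg w i \<and> w \<in> W \<and> i < k)"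
      using gS by (auto simp: S_def gens_def V2_def W_def)
    then show "zero_in_Lambda N (c g)"
    proof (elim disjE exE conjE)
      fix v assume "g = Vg v" "v \<in> V2"
      then show ?thesis using V2good by simp
    next
      fix w i assume gw: "g = Wg w i" and wW: "w \<in> W" and i: "i < k"
      have wV: "w \<in> V" using wW by (simp add: W_def Wu_def)
      have "(u, w) \<in> {(a, b). {a, b} \<in> E}\<^sup>*" using conn uV wV by (simp add: graph_connected_def)
      then show ?thesis using reach wW i gw by blast
    qed
  qed
qed

theorem lemma2p11:
  fixes V :: "'v::linorder set" and E :: "'v set set" and m :: "'v set \<Rightarrow> nat"
    and u :: 'v and k :: nat
  assumes "even_labeled_graph V E m"
    and "graph_connected V E"
    and "u \<in> V"
    and "2 \<le> k"
  shows "alexander_corank V E m u k \<le> 1"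
proof -
  define Rs where "Rs = relators V E m u k"
  define Cs where "Cs = gens V E m u k"
  define N where "N = rel_subgroup Rs"
  have finV: "finite V" using assms(1) by (simp add: even_labeled_graph_def)
  have finCs: "finite Cs" unfolding Cs_def by (rule gens_finite[OF finV])
  have U: "Ubar \<in> Cs" by (simp add: Cs_def gens_def)
  have ind: "cols_independent N Rs (\<lambda>r g. fox_ab r g) (Cs - {Ubar})"
    using main_indep[OF assms] by (simp add: N_def Rs_def Cs_def)
  let ?A = "{card S | S. S \<subseteq> Cs \<and> cols_independent N Rs (\<lambda>r g. fox_ab r g) S}"
  have mem: "card (Cs - {Ubar}) \<in> ?A" using ind by blast
  have sub: "?A \<subseteq> card ` Pow Cs" by blast
  have fin: "finite ?A" by (rule finite_subset[OF sub]) (simp add: finCs)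
  have "card (Cs - {Ubar}) \<le> Max ?A" by (rule Max_ge[OF fin mem])
  then have "card Cs - 1 \<le> frac_rank N Rs Cs (\<lambda>r g. fox_ab r g)"
    using card_Diff_singleton[OF U] by (simp add: frac_rank_def)
  then show ?thesis
    unfolding alexander_corank_def Let_def Rs_def[symmetric] Cs_def[symmetric] N_def[symmetric]
    by simp
qed

end
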